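(* Consider the system $$\frac{df}{dt}= r\alpha f m(1-f-m)-(1+h)f,\qquad \frac{dm}{dt}=(1-r)\alpha f m(1-f-m)+(s-1)m,$$ with $0<r<1$, $\alpha>0$, $h\ge0$, $0\le s<1$, and treat $s$ as a bifurcation parameter. Let $\mu=\frac{(1-r)(1+h)}{r(1-s)}$, $s^*=\frac{1}{r}+\frac{1-r}{4}\big(\frac{4h}{r}-\alpha\big)$, $h_*=\frac{r}{4}\big(\alpha-\frac{4}{r(1-r)}\big)$, $h^*=\frac{r}{4}\big(\alpha-\frac{4}{r}\big)$. If $h_*<h<h^*$, then at $s=s^*$ the two interior equilibria coincide at $E^*=\big(\frac{1}{2(1+\mu)},\frac{\mu}{2(1+\mu)}\big)$, where the Jacobian has a simple zero eigenvalue, and the system undergoes a saddle-node bifurcation at $E^*$ as $s$ crosses $s^*$: there are two interior equilibria for $s$ slightly larger than $s^*$ and none for $s<s^*$, so that as $s$ is decreased through $s^*$ the invasive population is eliminated (all solutions tend to $(0,0)$ after the interior equilibria disappear).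
   Context: Nondimensionalized FHMS mating model without Allee effect ($f,m$ scaled female/male densities, $r$ primary sex ratio, $h$ scaled female harvesting rate, $s$ scaled male stocking rate). Interior equilibria are equilibria with $f>0,m>0$; they lie on the line $m=\mu f$. *)

theory Defs
  imports "HOL-Analysis.Derivative" "Jordan_Normal_Form.Char_Poly"
begin

text \<open>Vector field of the nondimensionalized FHMS model (no Allee effect).
  Parameters: r (primary sex ratio), alpha, h (female harvesting), s (male stocking).\<close>
definition fhms_field :: "real \<Rightarrow> real \<Rightarrow> real \<Rightarrow> real \<Rightarrow> real \<times> real \<Rightarrow> real \<times> real" where
  "fhms_field r \<alpha> h s = (\<lambda>(f, m).
     (r * \<alpha> * f * m * (1 - f - m) - (1 + h) * f,
      (1 - r) * \<alpha> * f * m * (1 - f - m) + (s - 1) * m))"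

definition interior_equilibria :: "real \<Rightarrow> real \<Rightarrow> real \<Rightarrow> real \<Rightarrow> (real \<times> real) set" where
  "interior_equilibria r \<alpha> h s =
     {(f, m). f > 0 \<and> m > 0 \<and> fhms_field r \<alpha> h s (f, m) = (0, 0)}"

definition fhms_jacobian :: "real \<Rightarrow> real \<Rightarrow> real \<Rightarrow> real \<Rightarrow> real \<times> real \<Rightarrow> real mat" where
  "fhms_jacobian r \<alpha> h s p = mat 2 2 (\<lambda>(i, j).
     (let comp = (if i = 0 then fst else snd) in
      if j = 0 then deriv (\<lambda>x. comp (fhms_field r \<alpha> h s (x, snd p))) (fst p)
      else deriv (\<lambda>y. comp (fhms_field r \<alpha> h s (fst p, y))) (snd p)))"

end

theory Submission
  imports Defs "HOL-Analysis.Analysis" "HOL-Real_Asymp.Real_Asymp"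
begin


lemma eq_char:
  fixes r \<alpha> h s f m :: real
  assumes r: "0 < r" "r < 1" and a: "\<alpha> > 0" and hh: "h \<ge> 0" and s: "s < 1"
  shows "(f, m) \<in> interior_equilibria r \<alpha> h s \<longleftrightarrow>
    (\<exists>g>0. g^2 - g + ((1+h)/(r*\<alpha>) + (1-s)/((1-r)*\<alpha>)) = 0 \<and>
       f = (1-s)/((1-r)*\<alpha>*g) \<and> m = (1+h)/(r*\<alpha>*g))"
proof
  assume "(f, m) \<in> interior_equilibria r \<alpha> h s"
  then have f: "f > 0" and m: "m > 0" and e1: "r * \<alpha> * f * m * (1 - f - m) - (1 + h) * f = 0"
    and e2: "(1 - r) * \<alpha> * f * m * (1 - f - m) + (s - 1) * m = 0"
    by (auto simp: interior_equilibria_def fhms_field_def)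
  define g where "g = 1 - f - m"
  have e1': "r * \<alpha> * m * g = 1 + h"
  proof -
    have "f * (r * \<alpha> * m * (1 - f - m) - (1 + h)) = r * \<alpha> * f * m * (1 - f - m) - (1 + h) * f"
      by (simp add: algebra_simps)
    then have "f * (r * \<alpha> * m * (1 - f - m) - (1 + h)) = 0" using e1 by simp
    then show ?thesis using f unfolding g_def by simp
  qed
  have e2': "(1 - r) * \<alpha> * f * g = 1 - s"
  proof -
    have "m * ((1 - r) * \<alpha> * f * (1 - f - m) - (1 - s)) = (1 - r) * \<alpha> * f * m * (1 - f - m) + (s - 1) * m"
      by (simp add: algebra_simps)
    then have "m * ((1 - r) * \<alpha> * f * (1 - f - m) - (1 - s)) = 0" using e2 by simp
    then show ?thesis using m unfolding g_def by simp
  qed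
  have gpos: "g > 0"
  proof (rule ccontr)
    assume "\<not> g > 0"
    then have "r * \<alpha> * m * g \<le> 0" using r a m by (simp add: mult_nonneg_nonpos)
    then show False using e1' hh by simp
  qed
  have fe: "f = (1-s)/((1-r)*\<alpha>*g)" unfolding e2'[symmetric] using r a gpos by simp
  have me: "m = (1+h)/(r*\<alpha>*g)" unfolding e1'[symmetric] using r a gpos by simp
  have "g^2 - g + ((1+h)/(r*\<alpha>) + (1-s)/((1-r)*\<alpha>)) = g * (g - 1 + f + m)"
  proof -
    have 1: "(1+h)/(r*\<alpha>) = m*g" unfolding e1'[symmetric] using r a by simp
    have 2: "(1-s)/((1-r)*\<alpha>) = f*g" unfolding e2'[symmetric] using r a by simp
    show ?thesis unfolding 1 2 by (simp add: algebra_simps power2_eq_square)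
  qed
  also have "\<dots> = 0" unfolding g_def by simp
  finally show "\<exists>g>0. g^2 - g + ((1+h)/(r*\<alpha>) + (1-s)/((1-r)*\<alpha>)) = 0 \<and>
       f = (1-s)/((1-r)*\<alpha>*g) \<and> m = (1+h)/(r*\<alpha>*g)" using gpos fe me by blast
next
  assume "\<exists>g>0. g^2 - g + ((1+h)/(r*\<alpha>) + (1-s)/((1-r)*\<alpha>)) = 0 \<and>
       f = (1-s)/((1-r)*\<alpha>*g) \<and> m = (1+h)/(r*\<alpha>*g)"
  then obtain g where g: "g > 0" and q: "g^2 - g + ((1+h)/(r*\<alpha>) + (1-s)/((1-r)*\<alpha>)) = 0"
    and fe: "f = (1-s)/((1-r)*\<alpha>*g)" and me: "m = (1+h)/(r*\<alpha>*g)" by blast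
  have f: "f > 0" using fe r a g s by simp
  have m: "m > 0" using me r a g hh by simp
  have "g * (1 - f - m) = g * g - (g^2 - g + ((1+h)/(r*\<alpha>) + (1-s)/((1-r)*\<alpha>)))"
  proof -
    have 1: "(1+h)/(r*\<alpha>) = m*g" unfolding me using g by simp
    have 2: "(1-s)/((1-r)*\<alpha>) = f*g" unfolding fe using g by simp
    show ?thesis unfolding 1 2 by (simp add: algebra_simps power2_eq_square)
  qed
  then have "g * (1 - f - m) = g * g" using q by simp
  then have gg: "1 - f - m = g" using g by simp
  have 1: "r * \<alpha> * m * g = 1+h" unfolding me using g r a by simp
  have 2: "(1-r) * \<alpha> * f * g = 1-s" unfolding fe using g r a by simp
  have "r * \<alpha> * f * m * (1 - f - m) - (1 + h) * f = f * (r * \<alpha> * m * g - (1+h))"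
    unfolding gg by (simp add: algebra_simps)
  moreover have "(1 - r) * \<alpha> * f * m * (1 - f - m) + (s - 1) * m = m * ((1 - r) * \<alpha> * f * g - (1-s))"
    unfolding gg by (simp add: algebra_simps)
  ultimately show "(f, m) \<in> interior_equilibria r \<alpha> h s"
    unfolding interior_equilibria_def fhms_field_def using f m 1 2 by simp
qed

lemma det2: assumes "(A :: 'a :: comm_ring_1 mat) \<in> carrier_mat 2 2"
  shows "Determinant.det A = A $$ (0,0) * A $$ (1,1) - A $$ (0,1) * A $$ (1,0)"
proof -
  have "Determinant.det A = (\<Sum>j<2. A $$ (0,j) * cofactor A 0 j)"
    by (rule laplace_expansion_row[OF assms]) simp
  also have "\<dots> = A $$ (0,0) * cofactor A 0 0 + A $$ (0,1) * cofactor A 0 1"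
    by (simp add: numeral_2_eq_2)
  also have "cofactor A 0 0 = A $$ (1,1)"
    unfolding cofactor_def using assms
    by (subst det_single) (auto simp: mat_delete_def)
  also have "cofactor A 0 1 = - A $$ (1,0)"
    unfolding cofactor_def using assms
    by (subst det_single) (auto simp: mat_delete_def)
  finally show ?thesis by simp
qed

lemma char_poly2: assumes "(A :: 'a :: comm_ring_1 mat) \<in> carrier_mat 2 2"
  shows "char_poly A = [: A $$ (0,0) * A $$ (1,1) - A $$ (0,1) * A $$ (1,0), - (A $$ (0,0) + A $$ (1,1)), 1 :]"
  unfolding char_poly_def
  apply (subst det2)
  using assms apply simp
  using assms by (simp add: char_poly_matrix_def)

lemma order_zero_simple:
  fixes b :: real assumes "b \<noteq> 0" shows "order 0 [:0, b, 1:] = 1"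
proof -
  have e: "[:0, b, 1:] = [:0, 1:] * [:b, 1:]" by simp
  have o1: "order 0 [:0, 1::real:] = 1"
    using order_power_n_n[of 0 1] by simp
  have o2: "order 0 [:b, 1:] = 0" by (rule order_0I) (use assms in simp)
  show ?thesis unfolding e by (subst order_mult) (use o1 o2 in auto)
qed

lemma jac:
  fixes r \<alpha> h s f m :: real
  shows "fhms_jacobian r \<alpha> h s (f, m) = mat 2 2 (\<lambda>(i,j).
     if i = 0 then (if j = 0 then r*\<alpha>*m*(1-f-m) - r*\<alpha>*f*m - (1+h) else r*\<alpha>*f*(1-f-m) - r*\<alpha>*f*m)
     else (if j = 0 then (1-r)*\<alpha>*m*(1-f-m) - (1-r)*\<alpha>*f*m else (1-r)*\<alpha>*f*(1-f-m) - (1-r)*\<alpha>*f*m + (s-1)))"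
proof -
  have d1: "deriv (\<lambda>x. fst (fhms_field r \<alpha> h s (x, m))) f = r*\<alpha>*m*(1-f-m) - r*\<alpha>*f*m - (1+h)"
    unfolding fhms_field_def
    by (rule DERIV_imp_deriv, simp, (rule derivative_eq_intros refl)+, simp add: algebra_simps)
  have d2: "deriv (\<lambda>y. fst (fhms_field r \<alpha> h s (f, y))) m = r*\<alpha>*f*(1-f-m) - r*\<alpha>*f*m"
    unfolding fhms_field_def
    by (rule DERIV_imp_deriv, simp, (rule derivative_eq_intros refl)+, simp add: algebra_simps)
  have d3: "deriv (\<lambda>x. snd (fhms_field r \<alpha> h s (x, m))) f = (1-r)*\<alpha>*m*(1-f-m) - (1-r)*\<alpha>*f*m"
    unfolding fhms_field_def
    by (rule DERIV_imp_deriv, simp, (rule derivative_eq_intros refl)+, simp add: algebra_simps)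
  have d4: "deriv (\<lambda>y. snd (fhms_field r \<alpha> h s (f, y))) m = (1-r)*\<alpha>*f*(1-f-m) - (1-r)*\<alpha>*f*m + (s-1)"
    unfolding fhms_field_def
    by (rule DERIV_imp_deriv, simp, (rule derivative_eq_intros refl)+, simp add: algebra_simps)
  show ?thesis unfolding fhms_jacobian_def
    by (rule eq_matI) (auto simp: d1 d2 d3 d4)
qed



lemma eq_image:
  fixes r \<alpha> h s :: real
  assumes r: "0 < r" "r < 1" and a: "\<alpha> > 0" and hh: "h \<ge> 0" and s: "s < 1"
  shows "interior_equilibria r \<alpha> h s = (\<lambda>g. ((1-s)/((1-r)*\<alpha>*g), (1+h)/(r*\<alpha>*g))) `
      {g. g > 0 \<and> g^2 - g + ((1+h)/(r*\<alpha>) + (1-s)/((1-r)*\<alpha>)) = 0}"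
proof -
  have "\<And>f m. (f,m) \<in> interior_equilibria r \<alpha> h s \<longleftrightarrow> (f,m) \<in> (\<lambda>g. ((1-s)/((1-r)*\<alpha>*g), (1+h)/(r*\<alpha>*g))) `
      {g. g > 0 \<and> g^2 - g + ((1+h)/(r*\<alpha>) + (1-s)/((1-r)*\<alpha>)) = 0}"
    unfolding eq_char[OF r a hh s] by auto
  then show ?thesis apply (intro Set.set_eqI) subgoal for p by (cases p) simp done
qed

lemma roots_neg: fixes P :: real assumes "1 - 4*P < 0" shows "{g. g > 0 \<and> g^2 - g + P = 0} = {}"
proof -
  have pos: "g^2 - g + P > 0" for g :: real
  proof -
    have "g^2 - g + P = (g - 1/2)^2 + (P - 1/4)" by (simp add: power2_eq_square algebra_simps)
    moreover have "(g - 1/2)^2 \<ge> 0" by (rule zero_le_power2)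
    ultimately show ?thesis using assms by linarith
  qed
  show ?thesis using pos by (metis (mono_tags, lifting) empty_Collect_eq less_irrefl)
qed

lemma roots_zero: fixes P :: real assumes "1 - 4*P = 0" shows "{g. g > 0 \<and> g^2 - g + P = 0} = {1/2}"
proof -
  have e: "g^2 - g + P = 0 \<longleftrightarrow> g = 1/2" for g :: real
  proof -
    have "g^2 - g + P = (g - 1/2)^2" using assms by (simp add: power2_eq_square algebra_simps)
    then show ?thesis by simp
  qed
  show ?thesis
  proof (intro Set.set_eqI iffI)
    fix g assume "g \<in> {g. g > 0 \<and> g^2 - g + P = 0}" then show "g \<in> {1/2}" using e by simp
  next
    fix g :: real assume "g \<in> {1/2}" then show "g \<in> {g. g > 0 \<and> g^2 - g + P = 0}" using e by simp
  qed
qed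

lemma roots_pos: fixes P :: real assumes "1 - 4*P > 0" "P > 0"
  shows "{g. g > 0 \<and> g^2 - g + P = 0} = {(1 + sqrt (1-4*P))/2, (1 - sqrt (1-4*P))/2}"
    and "(1 + sqrt (1-4*P))/2 \<noteq> (1 - sqrt (1-4*P))/2"
proof -
  define q where "q = sqrt (1-4*P)"
  have q2: "q^2 = 1 - 4*P" unfolding q_def using assms by simp
  have q0: "q > 0" unfolding q_def using assms by simp
  have q1: "q < 1" unfolding q_def using assms real_sqrt_less_iff[of "1-4*P" 1] by simp
  have e: "g^2 - g + P = 0 \<longleftrightarrow> g = (1+q)/2 \<or> g = (1-q)/2" for g :: real
  proof -
    have "g^2 - g + P = (g - (1+q)/2) * (g - (1-q)/2)"
      using q2 by (simp add: power2_eq_square field_simps)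
    then show ?thesis by simp
  qed
  show "{g. g > 0 \<and> g^2 - g + P = 0} = {(1 + sqrt (1-4*P))/2, (1 - sqrt (1-4*P))/2}"
    unfolding q_def[symmetric]
  proof (intro Set.set_eqI iffI)
    fix g assume "g \<in> {g. g > 0 \<and> g^2 - g + P = 0}" then show "g \<in> {(1+q)/2, (1-q)/2}" using e by simp
  next
    fix g :: real assume "g \<in> {(1+q)/2, (1-q)/2}" then show "g \<in> {g. g > 0 \<and> g^2 - g + P = 0}"
      using e q0 q1 by auto
  qed
  show "(1 + sqrt (1-4*P))/2 \<noteq> (1 - sqrt (1-4*P))/2" using q0 unfolding q_def[symmetric] by simp
qed

lemma disc:
  fixes r \<alpha> h s :: real
  assumes r: "0 < r" "r < 1" and a: "\<alpha> > 0"
  shows "1 - 4 * ((1+h)/(r*\<alpha>) + (1-s)/((1-r)*\<alpha>)) =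
     4 * (s - (1 / r + (1 - r) / 4 * (4 * h / r - \<alpha>))) / ((1-r)*\<alpha>)"
proof -
  have nz: "r \<noteq> 0" "1 - r \<noteq> 0" "\<alpha> \<noteq> 0" using r a by auto
  have e1: "(1 - 4 * ((1+h)/(r*\<alpha>) + (1-s)/((1-r)*\<alpha>))) * (r * (1-r) * \<alpha>)
      = r * (1-r) * \<alpha> - 4 * (1+h) * (1-r) - 4 * (1-s) * r"
    using nz by (simp add: divide_simps) (simp add: algebra_simps)
  have e2: "(4 * (s - (1 / r + (1 - r) / 4 * (4 * h / r - \<alpha>))) / ((1-r)*\<alpha>)) * (r * (1-r) * \<alpha>)
      = r * (1-r) * \<alpha> - 4 * (1+h) * (1-r) - 4 * (1-s) * r"
    using nz by (simp add: divide_simps) (simp add: algebra_simps)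
  have K: "r * (1-r) * \<alpha> \<noteq> 0" using nz by simp
  have "(1 - 4 * ((1+h)/(r*\<alpha>) + (1-s)/((1-r)*\<alpha>))) * (r * (1-r) * \<alpha>) = 
     (4 * (s - (1 / r + (1 - r) / 4 * (4 * h / r - \<alpha>))) / ((1-r)*\<alpha>)) * (r * (1-r) * \<alpha>)"
    by (simp only: e1 e2)
  then show ?thesis using K by (simp only: mult_cancel_right) simp
qed



lemma decr:
  fixes \<phi> \<phi>' :: "real \<Rightarrow> real"
  assumes "a \<le> b" "continuous_on {a..b} \<phi>"
    "\<And>t. a < t \<Longrightarrow> t < b \<Longrightarrow> (\<phi> has_real_derivative \<phi>' t) (at t)"
    "\<And>t. a < t \<Longrightarrow> t < b \<Longrightarrow> \<phi>' t \<le> 0"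
  shows "\<phi> b \<le> \<phi> a"
  using DERIV_nonpos_imp_decreasing_open[of a b \<phi>] assms by blast

lemma barrier:
  fixes \<phi> \<phi>' :: "real \<Rightarrow> real"
  assumes cont: "continuous_on {T..} \<phi>"
    and der: "\<And>t. T < t \<Longrightarrow> (\<phi> has_real_derivative \<phi>' t) (at t)"
    and neg: "\<And>t. T < t \<Longrightarrow> \<phi> t > c \<Longrightarrow> \<phi>' t < 0"
    and init: "\<phi> T \<le> K" and cK: "c \<le> K" and t: "T \<le> t"
  shows "\<phi> t \<le> K"
proof (rule ccontr)
  assume "\<not> \<phi> t \<le> K"
  then have big: "\<phi> t > K" by simp
  define S where "S = {T..t} \<inter> \<phi> -` {..K}"
  have cont': "continuous_on {T..t} \<phi>" using cont by (rule continuous_on_subset) auto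
  have clS: "closed S" unfolding S_def by (rule continuous_closed_preimage[OF cont']) auto
  have TS: "T \<in> S" unfolding S_def using init t by auto
  have bdd: "bdd_above S" unfolding S_def by (rule bdd_above_Int1) simp
  define \<tau> where "\<tau> = Sup S"
  have \<tau>S: "\<tau> \<in> S" unfolding \<tau>_def using closed_contains_Sup[OF _ bdd clS] TS by blast
  then have \<tau>1: "T \<le> \<tau>" "\<tau> \<le> t" "\<phi> \<tau> \<le> K" unfolding S_def by auto
  have \<tau>t: "\<tau> < t" using \<tau>1 big by (metis order.not_eq_order_implies_strict not_le)
  have above: "\<phi> y > K" if "\<tau> < y" "y \<le> t" for y
  proof (rule ccontr)
    assume "\<not> \<phi> y > K"
    then have "y \<in> S" unfolding S_def using that \<tau>1 by auto
    then have "y \<le> \<tau>" unfolding \<tau>_def using bdd by (rule cSup_upper)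
    then show False using that by simp
  qed
  have "\<phi> t \<le> \<phi> \<tau>"
  proof (rule decr[of \<tau> t \<phi> \<phi>'])
    show "\<tau> \<le> t" using \<tau>t by simp
    show "continuous_on {\<tau>..t} \<phi>" using cont by (rule continuous_on_subset) (use \<tau>1 in auto)
    show "(\<phi> has_real_derivative \<phi>' y) (at y)" if "\<tau> < y" "y < t" for y
      using der[of y] that \<tau>1 by simp
    show "\<phi>' y \<le> 0" if "\<tau> < y" "y < t" for y
      using neg[of y] above[of y] that \<tau>1 cK by fastforce
  qed
  then show False using \<tau>1 big by simp
qed

lemma enter:
  fixes \<phi> \<phi>' :: "real \<Rightarrow> real"
  assumes cont: "continuous_on {T..} \<phi>"
    and der: "\<And>t. T < t \<Longrightarrow> (\<phi> has_real_derivative \<phi>' t) (at t)"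
    and neg: "\<And>t. T < t \<Longrightarrow> \<phi> t > \<epsilon> \<Longrightarrow> \<phi>' t \<le> - \<eta>"
    and \<eta>: "\<eta> > 0"
  shows "\<exists>T'\<ge>T. \<phi> T' \<le> \<epsilon>"
proof (rule ccontr)
  assume "\<not> (\<exists>T'\<ge>T. \<phi> T' \<le> \<epsilon>)"
  then have all: "\<phi> t > \<epsilon>" if "t \<ge> T" for t using that by force
  define t where "t = T + (\<bar>\<phi> T - \<epsilon>\<bar> + 1) / \<eta>"
  have tT: "T < t" unfolding t_def using \<eta> by (simp add: add_pos_nonneg)
  have "(\<lambda>y. \<phi> y + \<eta> * y) t \<le> (\<lambda>y. \<phi> y + \<eta> * y) T"
  proof (rule decr[of T t _ "\<lambda>y. \<phi>' y + \<eta>"])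
    show "T \<le> t" using tT by simp
    show "continuous_on {T..t} (\<lambda>y. \<phi> y + \<eta> * y)"
      by (intro continuous_intros continuous_on_subset[OF cont]) auto
    show "((\<lambda>y. \<phi> y + \<eta> * y) has_real_derivative \<phi>' y + \<eta>) (at y)" if "T < y" "y < t" for y
      using der[of y] that by (auto intro!: derivative_eq_intros)
    show "\<phi>' y + \<eta> \<le> 0" if "T < y" "y < t" for y
      using neg[of y] all[of y] that by fastforce
  qed
  then have "\<phi> t \<le> \<phi> T - \<eta> * (t - T)" by (simp add: algebra_simps)
  also have "\<eta> * (t - T) = \<bar>\<phi> T - \<epsilon>\<bar> + 1" unfolding t_def using \<eta> by simp
  finally have "\<phi> t < \<epsilon>" by linarith
  then show False using all[of t] tT by simp
qed

lemma eventually_small: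
  fixes \<phi> \<phi>' :: "real \<Rightarrow> real"
  assumes cont: "continuous_on {T..} \<phi>"
    and der: "\<And>t. T < t \<Longrightarrow> (\<phi> has_real_derivative \<phi>' t) (at t)"
    and neg: "\<And>t. T < t \<Longrightarrow> \<phi> t > \<epsilon> \<Longrightarrow> \<phi>' t \<le> - \<eta>"
    and \<eta>: "\<eta> > 0"
  shows "\<exists>T'. \<forall>t\<ge>T'. \<phi> t \<le> \<epsilon>"
proof -
  obtain T' where T': "T' \<ge> T" "\<phi> T' \<le> \<epsilon>" using enter[OF cont der neg \<eta>] by blast
  have "\<phi> t \<le> \<epsilon>" if "t \<ge> T'" for t
  proof (rule barrier[of T' \<phi> \<phi>' \<epsilon>])
    show "continuous_on {T'..} \<phi>" using cont by (rule continuous_on_subset) (use T' in auto)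
    show "(\<phi> has_real_derivative \<phi>' y) (at y)" if "T' < y" for y using der[of y] that T' by simp
    show "\<phi>' y < 0" if "T' < y" "\<phi> y > \<epsilon>" for y using neg[of y] that T' \<eta> by fastforce
  qed (use T' that in auto)
  then show ?thesis by blast
qed



lemma comp_deriv:
  assumes "(x has_vector_derivative V) F"
  shows "((\<lambda>t. fst (x t)) has_real_derivative fst V) F"
    and "((\<lambda>t. snd (x t)) has_real_derivative snd V) F"
proof -
  have d: "(x has_derivative (\<lambda>h. h *\<^sub>R V)) F" using assms by (simp add: has_vector_derivative_def)
  have "((\<lambda>t. fst (x t)) has_derivative (\<lambda>h. fst (h *\<^sub>R V))) F" by (rule has_derivative_fst[OF d])
  moreover have "(\<lambda>h. fst (h *\<^sub>R V)) = (*) (fst V)" by (rule ext) (simp add: mult.commute)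
  ultimately show "((\<lambda>t. fst (x t)) has_real_derivative fst V) F"
    by (simp add: has_field_derivative_def)
  have "((\<lambda>t. snd (x t)) has_derivative (\<lambda>h. snd (h *\<^sub>R V))) F" by (rule has_derivative_snd[OF d])
  moreover have "(\<lambda>h. snd (h *\<^sub>R V)) = (*) (snd V)" by (rule ext) (simp add: mult.commute)
  ultimately show "((\<lambda>t. snd (x t)) has_real_derivative snd V) F"
    by (simp add: has_field_derivative_def)
qed

lemma within_to_at:
  fixes f :: "real \<Rightarrow> real"
  assumes "(f has_real_derivative D) (at t within {0..})" "t > 0"
  shows "(f has_real_derivative D) (at t)"
proof -
  have "(f has_real_derivative D) (at t within {0..t+1})"
    by (rule has_field_derivative_subset[OF assms(1)]) auto
  moreover have "at t within {0..t+1} = at t" by (rule at_within_Icc_at) (use assms in auto)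
  ultimately show ?thesis by simp
qed

lemma linear_rep:
  fixes f a :: "real \<Rightarrow> real"
  assumes contf: "continuous_on {0..} f" and conta: "continuous_on {0..} a"
    and der: "\<And>t. t > 0 \<Longrightarrow> (f has_real_derivative f t * a t) (at t)"
    and t: "t \<ge> 0"
  shows "f t = f 0 * exp (integral {0..t} a)"
proof -
  define A where "A = (\<lambda>u. integral {0..u} a)"
  have contA: "continuous_on {0..t} A"
  proof -
    have ca: "continuous_on {0..t} a" using conta by (rule continuous_on_subset) auto
    have "\<forall>u\<in>{0..t}. continuous (at u within {0..t}) A"
      unfolding A_def using integral_has_vector_derivative[OF ca] has_vector_derivative_continuous by blast
    then show ?thesis using continuous_on_eq_continuous_within by blast
  qed
  have derA: "(A has_real_derivative a u) (at u)" if "0 < u" for u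
  proof -
    have ca: "continuous_on {0..u+1} a" using conta by (rule continuous_on_subset) auto
    have "(A has_vector_derivative a u) (at u within {0..u+1})"
      unfolding A_def by (rule integral_has_vector_derivative[OF ca]) (use that in auto)
    moreover have "at u within {0..u+1} = at u" by (rule at_within_Icc_at) (use that in auto)
    ultimately show ?thesis by (simp add: has_real_derivative_iff_has_vector_derivative)
  qed
  define \<phi> where "\<phi> = (\<lambda>u. f u * exp (- A u))"
  have cont\<phi>: "continuous_on {0..t} \<phi>" unfolding \<phi>_def
    by (intro continuous_intros contA continuous_on_subset[OF contf]) auto
  have der\<phi>: "(\<phi> has_real_derivative 0) (at u)" if "0 < u" for u
  proof -
    have "(\<phi> has_real_derivative (f u * a u) * exp (- A u) + f u * (exp (- A u) * (- a u))) (at u)"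
      unfolding \<phi>_def using der[OF that] derA[OF that]
      by (auto intro!: derivative_eq_intros simp: algebra_simps)
    then show ?thesis by (simp add: algebra_simps)
  qed
  have "\<phi> t \<le> \<phi> 0" by (rule decr[OF t cont\<phi> der\<phi>]) auto
  moreover have "(\<lambda>u. - \<phi> u) t \<le> (\<lambda>u. - \<phi> u) 0"
    by (rule decr[OF t _ _]) (use cont\<phi> in \<open>auto intro!: continuous_intros derivative_eq_intros der\<phi>\<close>)
  ultimately have "\<phi> t = \<phi> 0" by simp
  moreover have "A 0 = 0" unfolding A_def by simp
  ultimately have "f t * exp (- A t) = f 0" unfolding \<phi>_def by simp
  then have "f t = f 0 * exp (A t)" by (simp add: exp_minus field_simps)
  then show ?thesis unfolding A_def .
qed



lemma exp_decay: fixes \<kappa> C :: real assumes "\<kappa> > 0" shows "((\<lambda>t. C * exp (- \<kappa> * t)) \<longlongrightarrow> 0) at_top"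
  using assms by real_asymp

lemma integral_facts:
  fixes a :: "real \<Rightarrow> real"
  assumes conta: "continuous_on {0..} a"
  shows "t \<ge> 0 \<Longrightarrow> continuous_on {0..t} (\<lambda>u. integral {0..u} a)"
    and "u > 0 \<Longrightarrow> ((\<lambda>u. integral {0..u} a) has_real_derivative a u) (at u)"
proof -
  assume t: "t \<ge> 0"
  have ca: "continuous_on {0..t} a" using conta by (rule continuous_on_subset) auto
  have "\<forall>u\<in>{0..t}. continuous (at u within {0..t}) (\<lambda>u. integral {0..u} a)"
    using integral_has_vector_derivative[OF ca] has_vector_derivative_continuous by blast
  then show "continuous_on {0..t} (\<lambda>u. integral {0..u} a)" using continuous_on_eq_continuous_within by blast
next
  assume u: "u > 0"
  have ca: "continuous_on {0..u+1} a" using conta by (rule continuous_on_subset) auto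
  have "((\<lambda>u. integral {0..u} a) has_vector_derivative a u) (at u within {0..u+1})"
    by (rule integral_has_vector_derivative[OF ca]) (use u in auto)
  moreover have "at u within {0..u+1} = at u" by (rule at_within_Icc_at) (use u in auto)
  ultimately show "((\<lambda>u. integral {0..u} a) has_real_derivative a u) (at u)"
    by (simp add: has_real_derivative_iff_has_vector_derivative)
qed

lemma decay:
  fixes f p :: "real \<Rightarrow> real"
  assumes contf: "continuous_on {0..} f"
    and der: "\<And>t. t > 0 \<Longrightarrow> (f has_real_derivative p t - \<kappa> * f t) (at t)"
    and \<kappa>: "\<kappa> > 0" and p: "(p \<longlongrightarrow> 0) at_top" and nn: "\<And>t. t \<ge> 0 \<Longrightarrow> f t \<ge> 0"
  shows "(f \<longlongrightarrow> 0) at_top"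
proof (rule tendstoI)
  fix e :: real assume e: "e > 0"
  define \<epsilon> where "\<epsilon> = e / 2"
  have \<epsilon>: "\<epsilon> > 0" "\<epsilon> < e" unfolding \<epsilon>_def using e by auto
  have pos: "\<kappa> * \<epsilon> / 2 > 0" using \<kappa> \<epsilon> by simp
  have "\<forall>\<^sub>F t in at_top. dist (p t) 0 < \<kappa> * \<epsilon> / 2" using tendstoD[OF p pos] .
  then obtain T1 where T1: "\<And>t. t \<ge> T1 \<Longrightarrow> dist (p t) 0 < \<kappa> * \<epsilon> / 2"
    unfolding eventually_at_top_linorder by blast
  define T where "T = max T1 0"
  have "\<exists>T'. \<forall>t\<ge>T'. f t \<le> \<epsilon>"
  proof (rule eventually_small[of T f "\<lambda>t. p t - \<kappa> * f t" \<epsilon> "\<kappa> * \<epsilon> / 2"])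
    show "continuous_on {T..} f" using contf by (rule continuous_on_subset) (auto simp: T_def)
    show "(f has_real_derivative p t - \<kappa> * f t) (at t)" if "T < t" for t
      using der[of t] that by (simp add: T_def)
    show "p t - \<kappa> * f t \<le> - (\<kappa> * \<epsilon> / 2)" if "T < t" "\<epsilon> < f t" for t
    proof -
      have "p t < \<kappa> * \<epsilon> / 2" using T1[of t] that by (simp add: T_def dist_real_def)
      moreover have "\<kappa> * \<epsilon> < \<kappa> * f t" using that \<kappa> by simp
      ultimately show ?thesis by simp
    qed
    show "\<kappa> * \<epsilon> / 2 > 0" using \<kappa> \<epsilon> by simp
  qed
  then obtain T' where T': "\<And>t. t \<ge> T' \<Longrightarrow> f t \<le> \<epsilon>" by blast
  show "\<forall>\<^sub>F t in at_top. dist (f t) 0 < e"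
    unfolding eventually_at_top_linorder
  proof (intro exI allI impI)
    fix t assume "max T' 0 \<le> t"
    then show "dist (f t) 0 < e" using T'[of t] nn[of t] \<epsilon> by (simp add: dist_real_def)
  qed
qed



lemma ode_conv:
  fixes r \<alpha> h s :: real and x :: "real \<Rightarrow> real \<times> real"
  assumes r: "0 < r" "r < 1" and a: "\<alpha> > 0" and hh: "h \<ge> 0" and s: "0 \<le> s" "s < 1"
    and K: "\<alpha> / 4 < (1+h)/r + (1-s)/(1-r)"
    and x0: "fst (x 0) \<ge> 0" "snd (x 0) \<ge> 0"
    and xd: "\<forall>t\<ge>0. (x has_vector_derivative fhms_field r \<alpha> h s (x t)) (at t within {0..})"
  shows "(x \<longlongrightarrow> (0, 0)) at_top"
proof -
  define f where "f = (\<lambda>t. fst (x t))"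
  define m where "m = (\<lambda>t. snd (x t))"
  define c where "c = 1 + h"
  define k where "k = 1 - s"
  have c0: "c > 0" unfolding c_def using hh by simp
  have k0: "k > 0" unfolding k_def using s by simp
  define F where "F = (\<lambda>t. r*\<alpha>*f t*m t*(1 - f t - m t) - c * f t)"
  define G where "G = (\<lambda>t. (1-r)*\<alpha>*f t*m t*(1 - f t - m t) - k * m t)"
  have fld: "fhms_field r \<alpha> h s (x t) = (F t, G t)" for t
    unfolding fhms_field_def F_def G_def f_def m_def c_def k_def by (simp add: split_beta algebra_simps)
  have dW: "(f has_real_derivative F t) (at t within {0..})" "(m has_real_derivative G t) (at t within {0..})"
    if "t \<ge> 0" for t
    using comp_deriv[OF xd[rule_format, OF that]] unfolding fld f_def m_def by auto
  have dA: "(f has_real_derivative F t) (at t)" "(m has_real_derivative G t) (at t)" if "t > 0" for t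
    using within_to_at[OF dW(1) that] within_to_at[OF dW(2) that] that by auto
  have contx: "continuous_on {0..} x"
  proof -
    have "continuous (at t within {0..}) x" if "t \<in> {0..}" for t
      using xd that by (auto intro: has_vector_derivative_continuous)
    then show ?thesis by (simp add: continuous_on_eq_continuous_within)
  qed
  have contf: "continuous_on {0..} f" unfolding f_def by (intro continuous_intros contx)
  have contm: "continuous_on {0..} m" unfolding m_def by (intro continuous_intros contx)
  define pa where "pa = (\<lambda>t. r*\<alpha>*m t*(1 - f t - m t) - c)"
  define pb where "pb = (\<lambda>t. (1-r)*\<alpha>*f t*(1 - f t - m t) - k)"
  have conta: "continuous_on {0..} pa" unfolding pa_def by (intro continuous_intros contf contm)
  have contb: "continuous_on {0..} pb" unfolding pb_def by (intro continuous_intros contf contm)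
  define A where "A = (\<lambda>t. integral {0..t} pa)"
  define B where "B = (\<lambda>t. integral {0..t} pb)"
  have repf: "f t = f 0 * exp (A t)" if "t \<ge> 0" for t unfolding A_def
  proof (rule linear_rep[OF contf conta _ that])
    fix u :: real assume u: "u > 0"
    have "F u = f u * pa u" unfolding F_def pa_def by (simp add: algebra_simps)
    then show "(f has_real_derivative f u * pa u) (at u)" using dA(1)[OF u] by simp
  qed
  have repm: "m t = m 0 * exp (B t)" if "t \<ge> 0" for t unfolding B_def
  proof (rule linear_rep[OF contm contb _ that])
    fix u :: real assume u: "u > 0"
    have "G u = m u * pb u" unfolding G_def pb_def by (simp add: algebra_simps)
    then show "(m has_real_derivative m u * pb u) (at u)" using dA(2)[OF u] by simp
  qed
  have f00: "f 0 \<ge> 0" and m00: "m 0 \<ge> 0" using x0 unfolding f_def m_def by auto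
  have fnn: "f t \<ge> 0" if "t \<ge> 0" for t using repf[OF that] f00 by simp
  have mnn: "m t \<ge> 0" if "t \<ge> 0" for t using repm[OF that] m00 by simp
  define U where "U = max (f 0 + m 0) 1"
  have U1: "U \<ge> 1" unfolding U_def by simp
  have bnd: "f t + m t \<le> U" if "t \<ge> 0" for t
  proof (rule barrier[of 0 "\<lambda>t. f t + m t" "\<lambda>t. F t + G t" 1 U t])
    show "continuous_on {0..} (\<lambda>t. f t + m t)" by (intro continuous_intros contf contm)
    show "((\<lambda>t. f t + m t) has_real_derivative F t + G t) (at t)" if "0 < t" for t
      using dA[OF that] by (auto intro!: derivative_eq_intros)
    show "F t + G t < 0" if "0 < t" "f t + m t > 1" for t
    proof -
      have fm: "f t \<ge> 0" "m t \<ge> 0" using fnn mnn that by auto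
      have "F t + G t = \<alpha> * f t * m t * (1 - f t - m t) - c * f t - k * m t"
        unfolding F_def G_def by (simp add: algebra_simps)
      moreover have "\<alpha> * f t * m t * (1 - f t - m t) \<le> 0"
        using fm a that by (intro mult_nonneg_nonpos) auto
      moreover have "c * f t + k * m t > 0"
      proof (cases "f t > 0")
        case True then show ?thesis using c0 k0 fm by (simp add: add_pos_nonneg)
      next
        case False then have "m t > 0" using fm that by simp
        then show ?thesis using c0 k0 fm by (simp add: add_nonneg_pos)
      qed
      ultimately show ?thesis by simp
    qed
  qed (use that U1 in \<open>auto simp: U_def\<close>)
  have fm0: "((\<lambda>t. f t * m t) \<longlongrightarrow> 0) at_top"
  proof (cases "f 0 = 0 \<or> m 0 = 0")
    case True
    show ?thesis
    proof (rule Lim_null_comparison)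
      have z: "f t * m t = 0" if t: "t \<ge> 0" for t
      proof (cases "f 0 = 0")
        case True then show ?thesis using repf[OF t] by simp
      next
        case False then have "m 0 = 0" using \<open>f 0 = 0 \<or> m 0 = 0\<close> by simp
        then show ?thesis using repm[OF t] by simp
      qed
      show "\<forall>\<^sub>F t in at_top. norm (f t * m t) \<le> 0"
        unfolding eventually_at_top_linorder
        by (intro exI[of _ 0] allI impI) (simp add: z)
    qed simp
  next
    case False
    then have f0p: "f 0 > 0" and m0p: "m 0 > 0" using f00 m00 by auto
    define \<delta> where "\<delta> = c/r + k/(1-r) - \<alpha>/4"
    have \<delta>0: "\<delta> > 0" unfolding \<delta>_def c_def k_def using K by simp
    have W: "A t / r + B t / (1-r) \<le> - \<delta> * t" if t: "t \<ge> 0" for t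
    proof -
      define \<psi> where "\<psi> = (\<lambda>u. A u / r + B u / (1-r) + \<delta> * u)"
      have "\<psi> t \<le> \<psi> 0"
      proof (rule decr[of 0 t \<psi> "\<lambda>u. pa u / r + pb u / (1-r) + \<delta>"])
        show "0 \<le> t" by (rule t)
        show "continuous_on {0..t} \<psi>" unfolding \<psi>_def A_def B_def
          using r by (intro continuous_intros integral_facts(1)[OF conta t] integral_facts(1)[OF contb t]) auto
        show "(\<psi> has_real_derivative pa u / r + pb u / (1-r) + \<delta>) (at u)" if "0 < u" "u < t" for u
          unfolding \<psi>_def A_def B_def
          using integral_facts(2)[OF conta that(1)] integral_facts(2)[OF contb that(1)] r
          by (auto intro!: derivative_eq_intros)
        show "pa u / r + pb u / (1-r) + \<delta> \<le> 0" if "0 < u" "u < t" for u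
        proof -
          have "pa u / r + pb u / (1-r) + \<delta> = - \<alpha> * (f u + m u - 1/2)^2"
          proof -
            have 1: "pa u / r = \<alpha> * m u * (1 - f u - m u) - c / r"
              unfolding pa_def using r by (simp add: diff_divide_distrib)
            have 2: "pb u / (1-r) = \<alpha> * f u * (1 - f u - m u) - k / (1-r)"
              unfolding pb_def using r by (simp add: diff_divide_distrib)
            show ?thesis unfolding 1 2 \<delta>_def by (simp add: power2_eq_square algebra_simps)
          qed
          then show ?thesis using a by (simp add: mult_nonneg_nonneg)
        qed
      qed
      moreover have "\<psi> 0 = 0" unfolding \<psi>_def A_def B_def by simp
      ultimately show ?thesis unfolding \<psi>_def by simp
    qed
    define Am where "Am = ln (U / f 0)"
    define Bm where "Bm = ln (U / m 0)"
    have U0: "U > 0" using U1 by simp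
    have Ab: "A t \<le> Am" if t: "t \<ge> 0" for t
    proof -
      have "f 0 * exp (A t) \<le> U" using repf[OF t] bnd[OF t] mnn[OF t] by simp
      then have "exp (A t) \<le> U / f 0" using f0p by (simp add: pos_le_divide_eq mult.commute)
      then show ?thesis unfolding Am_def using U0 f0p by (simp add: ln_ge_iff)
    qed
    have Bb: "B t \<le> Bm" if t: "t \<ge> 0" for t
    proof -
      have "m 0 * exp (B t) \<le> U" using repm[OF t] bnd[OF t] fnn[OF t] by simp
      then have "exp (B t) \<le> U / m 0" using m0p by (simp add: pos_le_divide_eq mult.commute)
      then show ?thesis unfolding Bm_def using U0 m0p by (simp add: ln_ge_iff)
    qed
    define e where "e = 1/r + 1/(1-r)"
    have e0: "e > 0" unfolding e_def using r by (intro add_pos_pos) auto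
    define Q where "Q = Am / r + Bm / (1-r)"
    define C where "C = f 0 * m 0 * exp (Am + Bm - Q / e)"
    have AB: "A t + B t \<le> Am + Bm + (- \<delta> * t - Q) / e" if t: "t \<ge> 0" for t
    proof -
      define X where "X = A t - Am"
      define Y where "Y = B t - Bm"
      have X0: "X \<le> 0" unfolding X_def using Ab[OF t] by simp
      have Y0: "Y \<le> 0" unfolding Y_def using Bb[OF t] by simp
      have "X / (1-r) \<le> 0" using X0 r by (simp add: divide_nonpos_pos)
      then have eX: "e * X \<le> X / r" unfolding e_def by (simp add: algebra_simps)
      have "Y / r \<le> 0" using Y0 r by (simp add: divide_nonpos_pos)
      then have eY: "e * Y \<le> Y / (1-r)" unfolding e_def by (simp add: algebra_simps)
      have "X / r + Y / (1-r) = (A t / r + B t / (1-r)) - Q"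
        unfolding X_def Y_def Q_def by (simp add: diff_divide_distrib)
      also have "\<dots> \<le> - \<delta> * t - Q" using W[OF t] by simp
      finally have "e * (X + Y) \<le> - \<delta> * t - Q" using eX eY by (simp add: algebra_simps)
      then have "X + Y \<le> (- \<delta> * t - Q) / e" using e0 by (simp add: pos_le_divide_eq mult.commute)
      then show ?thesis unfolding X_def Y_def by simp
    qed
    show ?thesis
    proof (rule Lim_null_comparison)
      show "\<forall>\<^sub>F t in at_top. norm (f t * m t) \<le> C * exp (- (\<delta> / e) * t)"
        unfolding eventually_at_top_linorder
      proof (intro exI[of _ 0] allI impI)
        fix t :: real assume t: "0 \<le> t"
        have "norm (f t * m t) = f 0 * m 0 * exp (A t + B t)"
          using repf[OF t] repm[OF t] f0p m0p by (simp add: exp_add abs_mult)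
        also have "\<dots> \<le> f 0 * m 0 * exp (Am + Bm + (- \<delta> * t - Q) / e)"
          using AB[OF t] f0p m0p by simp
        also have "exp (Am + Bm + (- \<delta> * t - Q) / e) = exp (Am + Bm - Q / e) * exp (- (\<delta> / e) * t)"
          by (simp add: exp_add[symmetric] diff_divide_distrib)
        finally show "norm (f t * m t) \<le> C * exp (- (\<delta> / e) * t)" unfolding C_def by (simp add: mult.assoc)
      qed
      show "((\<lambda>t. C * exp (- (\<delta> / e) * t)) \<longlongrightarrow> 0) at_top"
        by (rule exp_decay) (use \<delta>0 e0 in simp)
    qed
  qed
  have fmg0: "((\<lambda>t. f t * m t * (1 - f t - m t)) \<longlongrightarrow> 0) at_top"
  proof (rule Lim_null_comparison)
    show "\<forall>\<^sub>F t in at_top. norm (f t * m t * (1 - f t - m t)) \<le> (1 + U) * (f t * m t)"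
      unfolding eventually_at_top_linorder
    proof (intro exI allI impI)
      fix t :: real assume t: "0 \<le> t"
      have fm: "f t * m t \<ge> 0" using fnn[OF t] mnn[OF t] by simp
      have "\<bar>1 - f t - m t\<bar> \<le> 1 + U" using bnd[OF t] fnn[OF t] mnn[OF t] U1 by linarith
      then have "(f t * m t) * \<bar>1 - f t - m t\<bar> \<le> (f t * m t) * (1 + U)"
        using fm by (intro mult_left_mono) auto
      moreover have "norm (f t * m t * (1 - f t - m t)) = (f t * m t) * \<bar>1 - f t - m t\<bar>"
        using fnn[OF t] mnn[OF t] by (simp add: abs_mult)
      ultimately show "norm (f t * m t * (1 - f t - m t)) \<le> (1 + U) * (f t * m t)"
        by (simp only: mult.commute)
    qed
    show "((\<lambda>t. (1 + U) * (f t * m t)) \<longlongrightarrow> 0) at_top"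
      using tendsto_mult_right_zero[OF fm0] by simp
  qed
  have flim: "(f \<longlongrightarrow> 0) at_top"
  proof (rule decay[OF contf _ c0 _ fnn])
    show "(f has_real_derivative r*\<alpha>*(f t * m t * (1 - f t - m t)) - c * f t) (at t)" if "t > 0" for t
      using dA(1)[OF that] unfolding F_def by (simp add: algebra_simps)
    show "((\<lambda>t. r*\<alpha>*(f t * m t * (1 - f t - m t))) \<longlongrightarrow> 0) at_top"
      using tendsto_mult_right_zero[OF fmg0] by simp
  qed
  have mlim: "(m \<longlongrightarrow> 0) at_top"
  proof (rule decay[OF contm _ k0 _ mnn])
    show "(m has_real_derivative (1-r)*\<alpha>*(f t * m t * (1 - f t - m t)) - k * m t) (at t)" if "t > 0" for t
      using dA(2)[OF that] unfolding G_def by (simp add: algebra_simps)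
    show "((\<lambda>t. (1-r)*\<alpha>*(f t * m t * (1 - f t - m t))) \<longlongrightarrow> 0) at_top"
      using tendsto_mult_right_zero[OF fmg0] by simp
  qed
  have "((\<lambda>t. (f t, m t)) \<longlongrightarrow> (0, 0)) at_top" by (rule tendsto_Pair[OF flim mlim])
  then show ?thesis unfolding f_def m_def by simp
qed



theorem mainTheorem3:
  fixes r \<alpha> h :: real
  assumes hr: "0 < r" "r < 1"
    and h\<alpha>: "\<alpha> > 0"
    and hh: "h \<ge> 0"
    and hrange: "r / 4 * (\<alpha> - 4 / (r * (1 - r))) < h" "h < r / 4 * (\<alpha> - 4 / r)"
  defines "s_crit \<equiv> 1 / r + (1 - r) / 4 * (4 * h / r - \<alpha>)"
  defines "\<mu> \<equiv> (1 - r) * (1 + h) / (r * (1 - s_crit))"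
  shows
    "0 \<le> s_crit \<and> s_crit < 1
     \<and> interior_equilibria r \<alpha> h s_crit = {(1 / (2 * (1 + \<mu>)), \<mu> / (2 * (1 + \<mu>)))}
     \<and> order 0 (char_poly (fhms_jacobian r \<alpha> h s_crit
                    (1 / (2 * (1 + \<mu>)), \<mu> / (2 * (1 + \<mu>))))) = 1
     \<and> (\<forall>\<^sub>F s in at_right s_crit. card (interior_equilibria r \<alpha> h s) = 2)
     \<and> (\<forall>s. 0 \<le> s \<and> s < s_crit \<longrightarrow> interior_equilibria r \<alpha> h s = {})
     \<and> (\<forall>s x. 0 \<le> s \<and> s < s_crit \<and> fst (x 0) \<ge> 0 \<and> snd (x 0) \<ge> 0
          \<and> (\<forall>t\<ge>0. (x has_vector_derivative fhms_field r \<alpha> h s (x t)) (at t within {0..}))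
          \<longrightarrow> (x \<longlongrightarrow> (0, 0)) at_top)"
proof -
  define c where "c = 1 + h"
  define D where "D = r * \<alpha> - 4 * c"
  have c0: "c > 0" unfolding c_def using hh by simp
  have nz: "r \<noteq> 0" "1 - r \<noteq> 0" "\<alpha> \<noteq> 0" using hr h\<alpha> by auto
  have rhs2: "r / 4 * (\<alpha> - 4 / r) = r * \<alpha> / 4 - 1" using nz by (simp add: field_simps)
  have D0: "D > 0" using hrange(2) unfolding rhs2 D_def c_def by simp
  have rhs1: "r / 4 * (\<alpha> - 4 / (r * (1 - r))) = r * \<alpha> / 4 - 1 / (1 - r)"
    using nz by (simp add: field_simps)
  have sc: "1 - s_crit = (1 - r) * D / (4 * r)"
  proof -
    have "(1 - s_crit) * (4 * r) = (1 - r) * D"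
      unfolding s_crit_def D_def c_def using nz by (simp add: field_simps)
    then show ?thesis using nz by (simp add: field_simps)
  qed
  have sc_lt: "s_crit < 1"
  proof -
    have "(1 - r) * D / (4 * r) > 0" using D0 hr by simp
    then show ?thesis using sc by linarith
  qed
  have sc_ge: "0 \<le> s_crit"
  proof -
    have "h > r * \<alpha> / 4 - 1 / (1 - r)" using hrange(1) rhs1 by simp
    then have "4 * (1 - r) * h > 4 * (1 - r) * (r * \<alpha> / 4 - 1 / (1 - r))"
      using hr by (intro mult_strict_left_mono) auto
    also have "4 * (1 - r) * (r * \<alpha> / 4 - 1 / (1 - r)) = (1 - r) * r * \<alpha> - 4"
      using nz by (simp add: field_simps)
    finally have "(1 - r) * D < 4 * r" unfolding D_def c_def by (simp add: algebra_simps)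
    then have "(1 - r) * D / (4 * r) < 1" using hr by simp
    then show ?thesis using sc by linarith
  qed
  define fs where "fs = D / (2 * r * \<alpha>)"
  define ms where "ms = 2 * c / (r * \<alpha>)"
  have mu: "\<mu> = 4 * c / D" unfolding \<mu>_def sc c_def[symmetric] using nz D0 by (simp add: field_simps)
  have rD: "r * \<alpha> = D + 4 * c" unfolding D_def by simp
  have E1: "1 / (2 * (1 + \<mu>)) = fs" unfolding mu fs_def using D0 c0 nz rD by (simp add: field_simps)
  have E2: "\<mu> / (2 * (1 + \<mu>)) = ms" unfolding mu ms_def using D0 c0 nz rD by (simp add: field_simps)
  have fsms: "fs + ms = 1/2"
  proof -
    have "fs + ms = (D + 4 * c) / (2 * (r * \<alpha>))" unfolding fs_def ms_def using nz by (simp add: field_simps)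
    also have "\<dots> = 1/2" unfolding rD[symmetric] using nz by simp
    finally show ?thesis .
  qed
  have ms_e: "r * \<alpha> * ms = 2 * c" unfolding ms_def using nz by simp
  have fs_e: "(1 - r) * \<alpha> * fs = 2 * (1 - s_crit)" unfolding fs_def sc using nz by (simp add: field_simps)
  have fs0: "fs > 0" unfolding fs_def using D0 hr h\<alpha> by simp
  have ms0: "ms > 0" unfolding ms_def using c0 hr h\<alpha> by simp
  have P_crit: "1 - 4 * ((1+h)/(r*\<alpha>) + (1-s_crit)/((1-r)*\<alpha>)) = 0"
    unfolding disc[OF hr h\<alpha>] s_crit_def by simp
  have eqset: "interior_equilibria r \<alpha> h s_crit = {(fs, ms)}"
  proof -
    have "interior_equilibria r \<alpha> h s_crit = (\<lambda>g. ((1-s_crit)/((1-r)*\<alpha>*g), (1+h)/(r*\<alpha>*g))) ` {1/2}"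
      unfolding eq_image[OF hr h\<alpha> hh sc_lt] roots_zero[OF P_crit] ..
    also have "\<dots> = {(fs, ms)}"
    proof -
      have "(1-s_crit)/((1-r)*\<alpha>*(1/2)) = fs" using fs_e nz
        by (simp add: field_simps)
      moreover have "(1+h)/(r*\<alpha>*(1/2)) = ms" using ms_e nz unfolding c_def
        by (simp add: field_simps)
      ultimately show ?thesis by simp
    qed
    finally show ?thesis .
  qed
  have jac_order: "order 0 (char_poly (fhms_jacobian r \<alpha> h s_crit (fs, ms))) = 1"
  proof -
    let ?J = "fhms_jacobian r \<alpha> h s_crit (fs, ms)"
    have J: "?J \<in> carrier_mat 2 2" unfolding jac by simp
    have g: "1 - fs - ms = 1/2" using fsms by simp
    have j00: "?J $$ (0,0) = - (r*\<alpha>*fs*ms)" unfolding jac g using ms_e unfolding c_def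
      by (simp add: algebra_simps)
    have j11: "?J $$ (1,1) = - ((1-r)*\<alpha>*fs*ms)" unfolding jac g using fs_e
      by (simp add: algebra_simps)
    have mse: "ms = 1/2 - fs" using fsms by simp
    have fse: "fs = 1/2 - ms" using fsms by simp
    have j01: "?J $$ (0,1) = r*\<alpha>*fs*fs" unfolding jac g
      by (simp add: field_simps mse)
    have j10: "?J $$ (1,0) = (1-r)*\<alpha>*ms*ms" unfolding jac g
      by (simp add: field_simps fse)
    have det0: "?J $$ (0,0) * ?J $$ (1,1) - ?J $$ (0,1) * ?J $$ (1,0) = 0"
      unfolding j00 j11 j01 j10 by (simp add: algebra_simps)
    have tr: "- (?J $$ (0,0) + ?J $$ (1,1)) = \<alpha> * fs * ms"
      unfolding j00 j11 by (simp add: algebra_simps)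
    have "char_poly ?J = [:0, \<alpha> * fs * ms, 1:]"
      unfolding char_poly2[OF J] det0 tr ..
    moreover have "\<alpha> * fs * ms \<noteq> 0" using h\<alpha> fs0 ms0 by simp
    ultimately show ?thesis using order_zero_simple by simp
  qed
  have right: "\<forall>\<^sub>F s in at_right s_crit. card (interior_equilibria r \<alpha> h s) = 2"
    unfolding eventually_at_right[OF sc_lt]
  proof (intro exI conjI allI impI)
    show "s_crit < 1" by (rule sc_lt)
    fix s assume s1: "s_crit < s" "s < 1"
    define P where "P = (1+h)/(r*\<alpha>) + (1-s)/((1-r)*\<alpha>)"
    have P0: "P > 0" unfolding P_def using hr h\<alpha> hh s1 by (intro add_pos_pos) auto
    have P1: "1 - 4 * P > 0" unfolding P_def disc[OF hr h\<alpha>] s_crit_def[symmetric]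
      using s1 hr h\<alpha> by simp
    define F where "F = (\<lambda>g. ((1-s)/((1-r)*\<alpha>*g), (1+h)/(r*\<alpha>*g)))"
    define g1 where "g1 = (1 + sqrt (1-4*P))/2"
    define g2 where "g2 = (1 - sqrt (1-4*P))/2"
    have "interior_equilibria r \<alpha> h s = F ` {g1, g2}"
      unfolding eq_image[OF hr h\<alpha> hh s1(2)] F_def[symmetric] P_def[symmetric] g1_def g2_def
        roots_pos(1)[OF P1 P0] ..
    also have "\<dots> = {F g1, F g2}" by simp
    finally have e: "interior_equilibria r \<alpha> h s = {F g1, F g2}" .
    have ne: "g1 \<noteq> g2" unfolding g1_def g2_def by (rule roots_pos(2)[OF P1 P0])
    have "F g1 \<noteq> F g2"
    proof
      assume "F g1 = F g2"
      then have "(1-s)/((1-r)*\<alpha>*g1) = (1-s)/((1-r)*\<alpha>*g2)" unfolding F_def by simp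
      moreover have "g1 > 0" "g2 > 0"
        using roots_pos(1)[OF P1 P0] unfolding g1_def[symmetric] g2_def[symmetric] by auto
      ultimately have "(1-s) * ((1-r)*\<alpha>*g2) = (1-s) * ((1-r)*\<alpha>*g1)"
        using nz by (auto simp add: frac_eq_eq)
      then show False using ne nz s1 by simp
    qed
    then show "card (interior_equilibria r \<alpha> h s) = 2" unfolding e by simp
  qed
  have left: "\<forall>s. 0 \<le> s \<and> s < s_crit \<longrightarrow> interior_equilibria r \<alpha> h s = {}"
  proof (intro allI impI)
    fix s assume s1: "0 \<le> s \<and> s < s_crit"
    then have s2: "s < 1" using sc_lt by simp
    have P1: "1 - 4 * ((1+h)/(r*\<alpha>) + (1-s)/((1-r)*\<alpha>)) < 0"
      unfolding disc[OF hr h\<alpha>] s_crit_def[symmetric]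
      using s1 hr h\<alpha> by (simp add: divide_neg_pos)
    show "interior_equilibria r \<alpha> h s = {}"
      unfolding eq_image[OF hr h\<alpha> hh s2] roots_neg[OF P1] by simp
  qed
  have conv: "\<forall>s x. 0 \<le> s \<and> s < s_crit \<and> fst (x 0) \<ge> 0 \<and> snd (x 0) \<ge> 0
          \<and> (\<forall>t\<ge>0. (x has_vector_derivative fhms_field r \<alpha> h s (x t)) (at t within {0..}))
          \<longrightarrow> (x \<longlongrightarrow> (0, 0)) at_top"
  proof (intro allI impI)
    fix s and x :: "real \<Rightarrow> real \<times> real"
    assume A: "0 \<le> s \<and> s < s_crit \<and> fst (x 0) \<ge> 0 \<and> snd (x 0) \<ge> 0
          \<and> (\<forall>t\<ge>0. (x has_vector_derivative fhms_field r \<alpha> h s (x t)) (at t within {0..}))"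
    have s2: "s < 1" using A sc_lt by simp
    have "(1-s)/(1-r) > (1-s_crit)/(1-r)" using A hr by (simp add: divide_strict_right_mono)
    also have "(1-s_crit)/(1-r) = \<alpha>/4 - (1+h)/r"
      unfolding sc D_def c_def using nz by (simp add: field_simps)
    finally have K: "\<alpha> / 4 < (1+h)/r + (1-s)/(1-r)" by linarith
    show "(x \<longlongrightarrow> (0, 0)) at_top"
      by (rule ode_conv[OF hr h\<alpha> hh _ s2 K]) (use A in auto)
  qed
  show ?thesis unfolding E1 E2 using sc_ge sc_lt eqset jac_order right left conv by blast
qed

end
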